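(* Let $d\ge2$. There is a constant $C_d>0$ depending only on $d$ such that for all $N\in\mathbb{N}$, all $X\in\mathcal X_N$ and all $z\in\mathbb{Z}^d$, $$\#\big(X\,\Delta\,(z+(B_{r_N}\cap\mathbb{Z}^d))\big)\le|\zeta(X)\,\Delta\,(B_{r_N}+z)|+C_dN^{\frac{d-1}{d}}P_N(X),$$ where $B_{r_N}$ is the closed Euclidean ball centered at $0$ with $|B_{r_N}|=N$.
   Context: $\mathcal X_N$ is the family of subsets of $\mathbb{Z}^d$ with exactly $N$ elements. For $X\subset\mathbb{Z}^d$ and $p\in X$, $\mathrm{val}(p)=\#\{q\in\mathbb{Z}^d\setminus X:|p-q|=1\}$, $P(X)=\sum_{p\in X}\mathrm{val}(p)$, and for $X\in\mathcal X_N$, $P_N(X)=N^{-(d-1)/d}P(X)$. Kuhn decomposition: for a permutation $\pi$ of $\{1,\dots,d\}$, $T_\pi=\{x\in\mathbb{R}^d:0\le x_{\pi(d)}\le\dots\le x_{\pi(1)}\le1\}$, $\mathcal{T}=\{z+T_\pi:z\in\mathbb{Z}^d,\pi\}$, $\mathcal T(i)=\{T\in\mathcal T:i\in T\}$, and $\zeta(X)=\bigcup_{i\in X}\bigcup_{T\in\mathcal T(i)}T$. $|\cdot|$ is Lebesgue measure, $\#$ cardinality, $\Delta$ symmetric difference. *)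

theory Defs
  imports "HOL-Analysis.Analysis"
begin

definition rvec :: "int ^ 'n \<Rightarrow> real ^ 'n" where
  "rvec z = (\<chi> i. real_of_int (z $ i))"

definition symdiff :: "'a set \<Rightarrow> 'a set \<Rightarrow> 'a set" where
  "symdiff A B = (A - B) \<union> (B - A)"

definition XN :: "nat \<Rightarrow> (int ^ 'n) set set" where
  "XN N = {X. finite X \<and> card X = N}"

definition val :: "(int ^ 'n) set \<Rightarrow> int ^ 'n \<Rightarrow> nat" where
  "val X p = card {q. q \<notin> X \<and> norm (rvec p - rvec q) = 1}"

definition Per :: "(int ^ 'n) set \<Rightarrow> nat" where
  "Per X = (\<Sum>p\<in>X. val X p)"

definition PerN :: "nat \<Rightarrow> (int ^ 'n) set \<Rightarrow> real" where
  "PerN N X = real N powr (- (real CARD('n) - 1) / real CARD('n)) * real (Per X)"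

text \<open>Kuhn simplex for an enumeration p of the coordinates (p k plays the role of \<pi>(k+1)):
  0 \<le> x_{p(d-1)} \<le> ... \<le> x_{p 0} \<le> 1.\<close>
definition kuhn_simplex :: "(nat \<Rightarrow> 'n::finite) \<Rightarrow> (real ^ 'n) set" where
  "kuhn_simplex p = {x. 0 \<le> x $ p (CARD('n) - 1) \<and>
      (\<forall>k. Suc k < CARD('n) \<longrightarrow> x $ p (Suc k) \<le> x $ p k) \<and> x $ p 0 \<le> 1}"

definition kuhn :: "(real ^ 'n::finite) set set" where
  "kuhn = {(\<lambda>x. rvec z + x) ` kuhn_simplex p | z p. bij_betw p {..<CARD('n)} (UNIV :: 'n set)}"

definition kuhn_at :: "int ^ 'n::finite \<Rightarrow> (real ^ 'n) set set" where
  "kuhn_at i = {T \<in> kuhn. rvec i \<in> T}"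

definition zeta :: "(int ^ 'n::finite) set \<Rightarrow> (real ^ 'n) set" where
  "zeta X = (\<Union>i\<in>X. \<Union>T\<in>kuhn_at i. T)"

definition rN :: "nat \<Rightarrow> real" where
  "rN N = (THE r. r \<ge> 0 \<and> measure lebesgue (cball (0 :: real ^ 'n::finite) r) = real N)"

end

theory Submission
  imports Defs
begin


lemma rvec_nth[simp]: "rvec z $ k = real_of_int (z $ k)"
  by (simp add: rvec_def)

lemma rvec_add: "rvec (a + b) = rvec a + rvec b"
  by (simp add: vec_eq_iff)

lemma rvec_diff: "rvec (a - b) = rvec a - rvec b"
  by (simp add: vec_eq_iff)

lemma rvec_inj: "rvec a = rvec b \<longleftrightarrow> a = b"
  by (auto simp: vec_eq_iff)

lemma finite_int_box:
  fixes A :: "'n::finite \<Rightarrow> int set"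
  assumes "\<And>k. finite (A k)"
  shows "finite {v :: int^'n. \<forall>k. v$k \<in> A k}"
proof -
  have "{v :: int^'n. \<forall>k. v$k \<in> A k} \<subseteq> vec_lambda ` (PiE UNIV A)"
  proof
    fix v :: "int^'n" assume "v \<in> {v. \<forall>k. v$k \<in> A k}"
    then have "(\<lambda>k. v$k) \<in> PiE UNIV A" by auto
    moreover have "v = vec_lambda (\<lambda>k. v$k)" by simp
    ultimately show "v \<in> vec_lambda ` (PiE UNIV A)" by blast
  qed
  moreover have "finite (PiE UNIV A)" using assms by (intro finite_PiE) auto
  ultimately show ?thesis by (meson finite_imageI finite_subset)
qed

lemma card_int_box_le:
  fixes A :: "'n::finite \<Rightarrow> int set"
  assumes "\<And>k. finite (A k)"
  shows "card {v :: int^'n. \<forall>k. v$k \<in> A k} \<le> (\<Prod>k\<in>UNIV. card (A k))"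
proof -
  have "{v :: int^'n. \<forall>k. v$k \<in> A k} \<subseteq> vec_lambda ` (PiE UNIV A)"
  proof
    fix v :: "int^'n" assume "v \<in> {v. \<forall>k. v$k \<in> A k}"
    then have "(\<lambda>k. v$k) \<in> PiE UNIV A" by auto
    moreover have "v = vec_lambda (\<lambda>k. v$k)" by simp
    ultimately show "v \<in> vec_lambda ` (PiE UNIV A)" by blast
  qed
  moreover have "finite (PiE UNIV A)" using assms by (intro finite_PiE) auto
  ultimately have "card {v :: int^'n. \<forall>k. v$k \<in> A k} \<le> card (vec_lambda ` (PiE UNIV A))"
    by (intro card_mono finite_imageI)
  also have "\<dots> \<le> card (PiE UNIV A)" by (rule card_image_le) (use assms in \<open>intro finite_PiE\<close>, auto)
  also have "\<dots> = (\<Prod>k\<in>UNIV. card (A k))" by (simp add: card_PiE)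
  finally show ?thesis .
qed

lemma finite_lattice_cball:
  "finite {i :: int^'n::finite. rvec i \<in> cball c R}"
proof -
  have "{i :: int^'n. rvec i \<in> cball c R} \<subseteq> {v. \<forall>k. v$k \<in> {\<lfloor>c$k - R\<rfloor>..\<lceil>c$k + R\<rceil>}}"
  proof (safe)
    fix i :: "int^'n" and k assume "rvec i \<in> cball c R"
    then have "norm (rvec i - c) \<le> R" by (simp add: dist_norm norm_minus_commute)
    moreover have "\<bar>(rvec i - c)$k\<bar> \<le> norm (rvec i - c)" by (rule component_le_norm_cart)
    ultimately have "\<bar>real_of_int (i$k) - c$k\<bar> \<le> R" by simp
    then show "i$k \<in> {\<lfloor>c$k - R\<rfloor>..\<lceil>c$k + R\<rceil>}"
      by (auto simp: floor_le_iff le_ceiling_iff)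
  qed
  then show ?thesis by (rule finite_subset) (rule finite_int_box, simp)
qed

lemma finite_lattice_bounded:
  assumes "bounded (rvec ` S)" shows "finite (S :: (int^'n::finite) set)"
proof -
  obtain R where "\<forall>x\<in>rvec ` S. norm x \<le> R" using assms bounded_iff by blast
  then have "S \<subseteq> {i. rvec i \<in> cball 0 R}" by auto
  then show ?thesis using finite_lattice_cball finite_subset by blast
qed

definition cube :: "int^'n::finite \<Rightarrow> (real^'n) set" where
  "cube i = cbox (rvec i - (\<chi> k. 1/2)) (rvec i + (\<chi> k. 1/2))"

definition rnd :: "real^'n::finite \<Rightarrow> int^'n" where
  "rnd x = (\<chi> k. \<lfloor>x$k + 1/2\<rfloor>)"

lemma mem_cube: "x \<in> cube i \<longleftrightarrow> (\<forall>k. \<bar>x$k - real_of_int (i$k)\<bar> \<le> 1/2)"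
proof -
  have "x \<in> cube i \<longleftrightarrow> (\<forall>k. real_of_int (i$k) - 1/2 \<le> x$k \<and> x$k \<le> real_of_int (i$k) + 1/2)"
    by (simp add: cube_def mem_box_cart)
  also have "\<dots> \<longleftrightarrow> (\<forall>k. \<bar>x$k - real_of_int (i$k)\<bar> \<le> 1/2)"
  proof -
    have "\<And>a t::real. (a - 1/2 \<le> t \<and> t \<le> a + 1/2) \<longleftrightarrow> \<bar>t - a\<bar> \<le> 1/2"
      by (simp only: abs_le_iff) linarith
    then show ?thesis by simp
  qed
  finally show ?thesis .
qed

lemma rnd_cube: "x \<in> cube (rnd x)"
  unfolding mem_cube rnd_def
proof (intro allI)
  fix k
  have "real_of_int \<lfloor>x$k + 1/2\<rfloor> \<le> x$k + 1/2" by (rule of_int_floor_le)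
  moreover have "x$k + 1/2 < real_of_int \<lfloor>x$k + 1/2\<rfloor> + 1" by (rule real_of_int_floor_add_one_gt)
  ultimately have "\<bar>x $ k - real_of_int \<lfloor>x $ k + 1 / 2\<rfloor>\<bar> \<le> 1 / 2"
    unfolding abs_le_iff by linarith
  then show "\<bar>x $ k - real_of_int ((\<chi> k. \<lfloor>x $ k + 1 / 2\<rfloor>) $ k)\<bar> \<le> 1 / 2"
    by simp
qed

lemma cube_lmeasurable[simp]: "cube i \<in> lmeasurable"
  by (simp add: cube_def)




lemma measure_cube[simp]: "measure lebesgue (cube i) = 1"
proof -
  have "rvec i \<in> cube i" by (simp add: mem_cube)
  then have ne: "cbox (rvec i - (\<chi> k. 1/2)) (rvec i + (\<chi> k. 1/2)) \<noteq> {}" unfolding cube_def by blast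
  show ?thesis unfolding cube_def
    using content_cbox_cart[OF ne] by simp
qed

lemma cube_negligible_inter:
  assumes "i \<noteq> j" shows "negligible (cube i \<inter> cube j)"
proof -
  obtain k where k: "i$k \<noteq> j$k" using assms by (auto simp: vec_eq_iff)
  have "negligible {x :: real^'a. (axis k 1) \<bullet> x = real_of_int (min (i$k) (j$k)) + 1/2}"
    by (rule negligible_hyperplane) (simp add: axis_eq_0_iff)
  moreover have "cube i \<inter> cube j \<subseteq> {x :: real^'a. (axis k 1) \<bullet> x = real_of_int (min (i$k) (j$k)) + 1/2}"
  proof
    fix x assume "x \<in> cube i \<inter> cube j"
    then have a: "\<bar>x$k - real_of_int (i$k)\<bar> \<le> 1/2" "\<bar>x$k - real_of_int (j$k)\<bar> \<le> 1/2"
      by (auto simp: mem_cube)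
    have "x$k = real_of_int (min (i$k) (j$k)) + 1/2"
    proof (cases "i$k < j$k")
      case True
      then have "real_of_int (i$k) + 1 \<le> real_of_int (j$k)" by linarith
      then show ?thesis using a True by (simp add: abs_le_iff)
    next
      case False
      then have "real_of_int (j$k) + 1 \<le> real_of_int (i$k)" using k by linarith
      then show ?thesis using a False by (simp add: abs_le_iff)
    qed
    then show "x \<in> {x. (axis k 1) \<bullet> x = real_of_int (min (i$k) (j$k)) + 1/2}"
      by (simp add: inner_commute cart_eq_inner_axis[symmetric])
  qed
  ultimately show ?thesis using negligible_subset by blast
qed

lemma measure_cubes:
  assumes "finite S"
  shows "measure lebesgue (\<Union>(cube ` S)) = real (card S)"
proof -
  have "measure lebesgue (\<Union>(cube ` S)) = (\<Sum>x\<in>S. measure lebesgue (cube x))"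
    by (rule measure_negligible_finite_Union_image) (use assms in \<open>auto simp: pairwise_def cube_negligible_inter\<close>)
  then show ?thesis by simp
qed

lemma cubes_lmeasurable: "finite S \<Longrightarrow> \<Union>(cube ` S) \<in> lmeasurable"
  by (rule fmeasurable.finite_UN) auto



lemma sort_perm_exists:
  fixes f :: "'n::finite \<Rightarrow> real"
  shows "\<exists>p. bij_betw p {..<CARD('n)} (UNIV :: 'n set) \<and>
     (\<forall>k. Suc k < CARD('n) \<longrightarrow> f (p (Suc k)) \<le> f (p k))"
proof -
  obtain xs :: "'n list" where xs: "set xs = UNIV" "distinct xs"
    using finite_distinct_list[of "UNIV :: 'n set"] by auto
  define ys where "ys = sort_key (\<lambda>k. - f k) xs"
  have ys: "set ys = UNIV" "distinct ys" "length ys = CARD('n)"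
    using xs by (auto simp: ys_def distinct_card[symmetric])
  have s: "sorted (map (\<lambda>k. - f k) ys)" unfolding ys_def by (rule sorted_sort_key)
  have "bij_betw ((!) ys) {..<CARD('n)} UNIV"
    by (rule bij_betw_nth) (use ys in auto)
  moreover have "f (ys ! Suc k) \<le> f (ys ! k)" if "Suc k < CARD('n)" for k
  proof -
    have "map (\<lambda>k. - f k) ys ! k \<le> map (\<lambda>k. - f k) ys ! Suc k"
      by (rule sorted_nth_mono[OF s]) (use that ys in auto)
    then show ?thesis using that ys by simp
  qed
  ultimately show ?thesis by blast
qed

lemma kuhn_simplex_bounds:
  assumes p: "bij_betw p {..<CARD('n)} (UNIV :: 'n::finite set)"
    and y: "y \<in> kuhn_simplex p"
  shows "0 \<le> y$m \<and> y$m \<le> 1"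
proof -
  let ?d = "CARD('n)"
  obtain k where k: "k < ?d" "m = p k" using p unfolding bij_betw_def by (metis UNIV_I imageE lessThan_iff)
  have y0: "0 \<le> y $ p (?d - 1)" "\<And>k. Suc k < ?d \<Longrightarrow> y $ p (Suc k) \<le> y $ p k" "y $ p 0 \<le> 1"
    using y by (auto simp: kuhn_simplex_def)
  have up: "y $ p k \<le> y $ p 0" if "k < ?d" for k
    using that
  proof (induction k)
    case 0 then show ?case by simp
  next
    case (Suc k) then show ?case using y0(2)[of k] by simp
  qed
  have down: "y $ p (?d - 1) \<le> y $ p k" if "k \<le> ?d - 1" for k
    using that
  proof (induction k rule: inc_induct)
    case base then show ?case by simp
  next
    case (step n)
    then have "Suc n < ?d" by linarith
    then show ?case using y0(2)[of n] step.IH by linarith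
  qed
  have "k \<le> ?d - 1" using k by linarith
  from down[OF this] show ?thesis using up[OF k(1)] k y0 by auto
qed

lemma cube_in_kuhn:
  fixes x :: "real^'n::finite" and i :: "int^'n"
  assumes x: "x \<in> cube i"
  shows "\<exists>T\<in>kuhn_at i. x \<in> T"
proof -
  let ?d = "CARD('n)"
  define e :: "'n \<Rightarrow> int" where "e k = (if x$k < real_of_int (i$k) then 1 else 0)" for k
  define z where "z = (\<chi> k. i$k - e k)"
  define u where "u = x - rvec z"
  define v where "v k = u$k + real_of_int (e k)" for k
  have xb: "\<bar>x$k - real_of_int (i$k)\<bar> \<le> 1/2" for k using x by (simp add: mem_cube)
  have u1: "e k = 1 \<Longrightarrow> 1/2 \<le> u$k \<and> u$k \<le> 1" for k
    using xb[of k] by (auto simp: u_def z_def e_def split: if_splits)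
  have u0: "e k = 0 \<Longrightarrow> 0 \<le> u$k \<and> u$k \<le> 1/2" for k
    using xb[of k] by (auto simp: u_def z_def e_def split: if_splits)
  have e01: "e k = 0 \<or> e k = 1" for k by (simp add: e_def)
  obtain p where p: "bij_betw p {..<?d} (UNIV :: 'n set)"
    and ps: "\<And>k. Suc k < ?d \<Longrightarrow> v (p (Suc k)) \<le> v (p k)"
    using sort_perm_exists[of v] by blast
  have emono: "e (p (Suc k)) \<le> e (p k)" if "Suc k < ?d" for k
  proof (rule ccontr)
    assume "\<not> ?thesis"
    then have "e (p (Suc k)) = 1" "e (p k) = 0" using e01[of "p k"] e01[of "p (Suc k)"] by auto
    then show False using ps[OF that] u1[of "p (Suc k)"] u0[of "p k"] by (simp add: v_def)
  qed
  have umono: "u $ p (Suc k) \<le> u $ p k" if "Suc k < ?d" for k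
    using ps[OF that] emono[OF that] e01[of "p k"] e01[of "p (Suc k)"]
      u1[of "p (Suc k)"] u0[of "p k"] u1[of "p k"] u0[of "p (Suc k)"]
    by (auto simp: v_def)
  have ub: "0 \<le> u$k \<and> u$k \<le> 1" for k
    using e01[of k] u0[of k] u1[of k] by auto
  have uS: "u \<in> kuhn_simplex p"
    unfolding kuhn_simplex_def using umono ub by blast
  have eb: "0 \<le> real_of_int (e k) \<and> real_of_int (e k) \<le> 1" for k
    using e01[of k] by auto
  have emono': "real_of_int (e (p (Suc k))) \<le> real_of_int (e (p k))" if "Suc k < ?d" for k
    using emono[OF that] by simp
  have eS: "rvec (\<chi> k. e k) \<in> kuhn_simplex p"
    unfolding kuhn_simplex_def using emono' eb by simp
  define T where "T = (\<lambda>y. rvec z + y) ` kuhn_simplex p"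
  have "T \<in> kuhn" unfolding kuhn_def T_def using p by blast
  moreover have "rvec i \<in> T"
  proof -
    have "rvec i = rvec z + rvec (\<chi> k. e k)" by (simp add: vec_eq_iff z_def)
    then show ?thesis unfolding T_def using eS by blast
  qed
  moreover have "x \<in> T" unfolding T_def using uS by (intro image_eqI[of _ _ u]) (auto simp: u_def)
  ultimately show ?thesis unfolding kuhn_at_def by blast
qed



lemma kuhn_simplex_closed: "closed (kuhn_simplex (p :: nat \<Rightarrow> 'n::finite))"
proof -
  have c: "closed {x :: real^'n. Suc k < CARD('n) \<longrightarrow> x $ p (Suc k) \<le> x $ p k}" for k
    by (cases "Suc k < CARD('n)") (auto intro!: closed_Collect_le continuous_intros)
  show ?thesis unfolding kuhn_simplex_def
    by (intro closed_Collect_conj closed_Collect_all c closed_Collect_le continuous_intros)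
qed

lemma kuhn_simplex_sub_box:
  assumes p: "bij_betw p {..<CARD('n)} (UNIV :: 'n::finite set)"
  shows "kuhn_simplex p \<subseteq> cbox (0::real^'n) 1"
  using kuhn_simplex_bounds[OF p] by (auto simp: mem_box_cart)

lemma kuhn_compact:
  assumes "T \<in> kuhn" shows "compact (T :: (real^'n::finite) set)"
proof -
  obtain z p where T: "T = (\<lambda>x. rvec z + x) ` kuhn_simplex p" and p: "bij_betw p {..<CARD('n)} (UNIV :: 'n set)"
    using assms unfolding kuhn_def by blast
  have "compact (kuhn_simplex p)"
    using kuhn_simplex_closed kuhn_simplex_sub_box[OF p]
    by (meson bounded_cbox bounded_subset compact_eq_bounded_closed)
  then show ?thesis unfolding T by (intro compact_continuous_image continuous_intros)
qed

definition restr :: "(nat \<Rightarrow> 'n::finite) \<Rightarrow> nat \<Rightarrow> 'n" where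
  "restr p = (\<lambda>k. if k < CARD('n) then p k else undefined)"

lemma kuhn_simplex_restr: "kuhn_simplex (restr p) = kuhn_simplex (p :: nat \<Rightarrow> 'n::finite)"
proof -
  have d: "0 < CARD('n)" by simp
  have "CARD('n) - 1 < CARD('n)" using d by linarith
  then show ?thesis unfolding kuhn_simplex_def restr_def using d
    by (auto simp: Suc_lessD)
qed

lemma kuhn_at_finite: "finite (kuhn_at (i :: int^'n::finite))"
proof -
  let ?Z = "{z :: int^'n. \<forall>k. z$k \<in> {i$k - 1..i$k}}"
  let ?P = "PiE {..<CARD('n)} (\<lambda>_. UNIV :: 'n set)"
  have "kuhn_at i \<subseteq> (\<lambda>(z,q). (\<lambda>x. rvec z + x) ` kuhn_simplex q) ` (?Z \<times> ?P)"
  proof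
    fix T assume "T \<in> kuhn_at i"
    then obtain z p where T: "T = (\<lambda>x. rvec z + x) ` kuhn_simplex p"
      and p: "bij_betw p {..<CARD('n)} (UNIV :: 'n set)" and iT: "rvec i \<in> T"
      unfolding kuhn_at_def kuhn_def by blast
    obtain y where y: "y \<in> kuhn_simplex p" "rvec i = rvec z + y" using iT T by blast
    have "z \<in> ?Z"
    proof (simp, intro allI)
      fix k
      have "0 \<le> y$k \<and> y$k \<le> 1" using kuhn_simplex_bounds[OF p y(1)] .
      moreover have "y$k = real_of_int (i$k) - real_of_int (z$k)" using y(2)
        by (metis add_diff_cancel_left' rvec_nth vector_minus_component)
      ultimately show "i $ k - 1 \<le> z $ k \<and> z $ k \<le> i $ k" by linarith
    qed
    moreover have "restr p \<in> ?P" by (simp add: restr_def PiE_def extensional_def)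
    moreover have "T = (\<lambda>(z,q). (\<lambda>x. rvec z + x) ` kuhn_simplex q) (z, restr p)"
      by (simp add: T kuhn_simplex_restr)
    ultimately show "T \<in> (\<lambda>(z,q). (\<lambda>x. rvec z + x) ` kuhn_simplex q) ` (?Z \<times> ?P)" by blast
  qed
  moreover have "finite (?Z \<times> ?P)"
    by (intro finite_cartesian_product finite_int_box finite_PiE) auto
  ultimately show ?thesis using finite_subset by blast
qed

lemma zeta_compact:
  assumes "finite X" shows "compact (zeta (X :: (int^'n::finite) set))"
  unfolding zeta_def
  using assms kuhn_at_finite kuhn_compact
  by (intro compact_UN compact_Union) (auto simp: kuhn_at_def)

lemma zeta_lmeasurable: "finite X \<Longrightarrow> zeta X \<in> lmeasurable"
  by (simp add: lmeasurable_compact zeta_compact)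

lemma cubes_sub_zeta: "\<Union>(cube ` X) \<subseteq> zeta X"
  unfolding zeta_def using cube_in_kuhn by blast

definition nbhd :: "(int^'n::finite) set \<Rightarrow> (int^'n) set" where
  "nbhd X = {j. \<exists>i\<in>X. \<forall>k. \<bar>j$k - i$k\<bar> \<le> 1}"

lemma zeta_sub_cubes: "zeta X \<subseteq> \<Union>(cube ` nbhd X)"
proof
  fix y assume "y \<in> zeta X"
  then obtain i T where i: "i \<in> X" and T: "T \<in> kuhn_at i" "y \<in> T" unfolding zeta_def by blast
  then obtain z p where T': "T = (\<lambda>x. rvec z + x) ` kuhn_simplex p"
      and p: "bij_betw p {..<CARD('a)} (UNIV :: 'a set)" and iT: "rvec i \<in> T"
      unfolding kuhn_at_def kuhn_def by blast
  obtain s where s: "s \<in> kuhn_simplex p" "rvec i = rvec z + s" using iT T' by blast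
  obtain t where t: "t \<in> kuhn_simplex p" "y = rvec z + t" using T T' by blast
  have "\<forall>k. \<bar>rnd y $ k - i$k\<bar> \<le> 1"
  proof
    fix k
    have "0 \<le> s$k \<and> s$k \<le> 1" "0 \<le> t$k \<and> t$k \<le> 1"
      using kuhn_simplex_bounds[OF p s(1)] kuhn_simplex_bounds[OF p t(1)] by auto
    moreover have "real_of_int (i$k) = real_of_int (z$k) + s$k" using s(2)
      by (metis rvec_nth vector_add_component)
    moreover have "y$k = real_of_int (z$k) + t$k" using t(2) by simp
    moreover have h: "\<bar>y$k - real_of_int (rnd y $ k)\<bar> \<le> 1/2" using rnd_cube[of y] by (simp add: mem_cube)
    moreover have "y$k - real_of_int (rnd y $ k) \<le> 1/2" "real_of_int (rnd y $ k) - y$k \<le> 1/2"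
      using h unfolding abs_le_iff by linarith+
    ultimately have "\<bar>real_of_int (rnd y $ k) - real_of_int (i$k)\<bar> < 2" unfolding abs_less_iff by linarith
    then have "\<bar>rnd y $ k - i$k\<bar> < 2" by linarith
    then show "\<bar>rnd y $ k - i$k\<bar> \<le> 1" by linarith
  qed
  then have "rnd y \<in> nbhd X" unfolding nbhd_def using i by blast
  then show "y \<in> \<Union>(cube ` nbhd X)" using rnd_cube[of y] by blast
qed



definition bpairs :: "(int^'n::finite) set \<Rightarrow> ((int^'n) \<times> (int^'n)) set" where
  "bpairs X = {(p,q). p \<in> X \<and> q \<notin> X \<and> norm (rvec p - rvec q) = 1}"

definition bdry :: "(int^'n::finite) set \<Rightarrow> (int^'n) set" where
  "bdry X = {q. q \<notin> X \<and> (\<exists>p\<in>X. norm (rvec p - rvec q) = 1)}"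

lemma finite_adj: "finite {q :: int^'n::finite. P q \<and> norm (rvec p - rvec q) = 1}"
proof -
  have "{q :: int^'n. P q \<and> norm (rvec p - rvec q) = 1} \<subseteq> {q. rvec q \<in> cball (rvec p) 1}"
    by (auto simp: dist_norm)
  then show ?thesis using finite_lattice_cball finite_subset by blast
qed

lemma Per_bpairs:
  assumes "finite X" shows "Per X = card (bpairs X)"
proof -
  have "bpairs X = Sigma X (\<lambda>p. {q. q \<notin> X \<and> norm (rvec p - rvec q) = 1})"
    by (auto simp: bpairs_def)
  then show ?thesis unfolding Per_def val_def
    using card_SigmaI[of X "\<lambda>p. {q. q \<notin> X \<and> norm (rvec p - rvec q) = 1}"]
      assms finite_adj[of "\<lambda>q. q \<notin> X"] by auto
qed

lemma finite_bpairs: "finite X \<Longrightarrow> finite (bpairs X)"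
proof -
  assume X: "finite X"
  have "bpairs X = Sigma X (\<lambda>p. {q. q \<notin> X \<and> norm (rvec p - rvec q) = 1})"
    by (auto simp: bpairs_def)
  then show ?thesis using X finite_adj[of "\<lambda>q. q \<notin> X"] by (simp add: finite_SigmaI)
qed

lemma card_bdry: "finite X \<Longrightarrow> card (bdry X) \<le> Per X"
proof -
  assume X: "finite X"
  have "bdry X = snd ` bpairs X" by (force simp: bdry_def bpairs_def image_iff)
  then have "card (bdry X) \<le> card (bpairs X)" by (simp add: card_image_le finite_bpairs X)
  then show ?thesis using Per_bpairs[OF X] by simp
qed

definition stepv :: "int^'n::finite \<Rightarrow> 'n \<Rightarrow> int \<Rightarrow> int^'n" where
  "stepv i k s = (\<chi> m. if m = k then i$m + s else i$m)"

lemma norm_axis_real: "norm (axis k (a::real)) = \<bar>a\<bar>"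
proof -
  have "axis k a = a *\<^sub>R axis k 1" by (simp add: vec_eq_iff axis_def)
  then show ?thesis by simp
qed

lemma norm_stepv:
  assumes "\<bar>s\<bar> = 1" shows "norm (rvec i - rvec (stepv i k s)) = 1"
proof -
  have "rvec i - rvec (stepv i k s) = axis k (- real_of_int s)"
    by (simp add: vec_eq_iff axis_def stepv_def)
  then show ?thesis using assms by (simp add: norm_axis_real)
qed

definition box3 :: "int^'n::finite \<Rightarrow> (int^'n) set" where
  "box3 q = {v. \<forall>k. v$k \<in> {q$k - 1..q$k + 1}}"

lemma box3_iff: "v \<in> box3 q \<longleftrightarrow> (\<forall>k. \<bar>v$k - q$k\<bar> \<le> 1)"
proof -
  have "\<And>a b::int. (b - 1 \<le> a \<and> a \<le> b + 1) \<longleftrightarrow> \<bar>a - b\<bar> \<le> 1" by arith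
  then show ?thesis by (simp add: box3_def)
qed

lemma finite_box3: "finite (box3 q)"
  unfolding box3_def by (rule finite_int_box) simp

lemma card_box3: "card (box3 (q :: int^'n::finite)) \<le> 3 ^ CARD('n)"
proof -
  have "card (box3 q) \<le> (\<Prod>k\<in>UNIV. card {q$k - 1..q$k + 1})"
    unfolding box3_def by (rule card_int_box_le) simp
  also have "\<dots> = 3 ^ CARD('n)" by simp
  finally show ?thesis .
qed

lemma path_lemma:
  fixes X :: "(int^'n::finite) set"
  shows "j \<notin> X \<Longrightarrow> i \<in> X \<Longrightarrow> \<forall>k. \<bar>j$k - i$k\<bar> \<le> 1 \<Longrightarrow> \<exists>q\<in>bdry X. j \<in> box3 q"
proof (induction "card {k. i$k \<noteq> j$k}" arbitrary: i rule: less_induct)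
  case less
  have "i \<noteq> j" using less.prems by auto
  then obtain k where k: "i$k \<noteq> j$k" by (auto simp: vec_eq_iff)
  define i' where "i' = stepv i k (j$k - i$k)"
  have s: "\<bar>j$k - i$k\<bar> = 1" using k less.prems(3) by (metis abs_le_zero_iff antisym_conv diff_eq_eq eq_iff_diff_eq_0 int_one_le_iff_zero_less zero_less_abs_iff)
  have adj: "norm (rvec i - rvec i') = 1" unfolding i'_def by (rule norm_stepv[OF s])
  have ji': "\<forall>m. \<bar>j$m - i'$m\<bar> \<le> 1" using less.prems(3) by (simp add: i'_def stepv_def)
  show ?case
  proof (cases "i' \<in> X")
    case False
    then have "i' \<in> bdry X" using adj less.prems(2) unfolding bdry_def by blast
    then show ?thesis using ji' box3_iff by blast
  next
    case True
    have sub: "{m. i'$m \<noteq> j$m} \<subseteq> {m. i$m \<noteq> j$m} - {k}" by (auto simp: i'_def stepv_def)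
    have "card ({m. i$m \<noteq> j$m} - {k}) < card {m. i$m \<noteq> j$m}"
      by (rule card_Diff1_less) (use k in auto)
    then have "card {m. i'$m \<noteq> j$m} < card {m. i$m \<noteq> j$m}"
      using card_mono[OF _ sub] by (meson finite le_less_trans)
    then show ?thesis using less.hyps[of i'] True less.prems(1) ji' by blast
  qed
qed

lemma nbhd_sub: "nbhd X - X \<subseteq> (\<Union>q\<in>bdry X. box3 q)"
  unfolding nbhd_def using path_lemma by blast

lemma finite_nbhd: "finite X \<Longrightarrow> finite (nbhd X)"
proof -
  assume X: "finite X"
  have "nbhd X \<subseteq> (\<Union>i\<in>X. box3 i)" unfolding nbhd_def using box3_iff by blast
  moreover have "finite (\<Union>i\<in>X. box3 i)" using X finite_box3 by blast
  ultimately show ?thesis by (rule finite_subset)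
qed

lemma bdry_eq: "bdry X = snd ` bpairs X"
  by (force simp: bdry_def bpairs_def image_iff)

lemma finite_bdry: "finite X \<Longrightarrow> finite (bdry X)"
  unfolding bdry_eq by (intro finite_imageI finite_bpairs)

lemma card_nbhd_diff:
  assumes "finite X" shows "card (nbhd X - X) \<le> 3 ^ CARD('n) * Per (X :: (int^'n::finite) set)"
proof -
  have "card (nbhd X - X) \<le> card (\<Union>q\<in>bdry X. box3 q)"
    by (rule card_mono[OF _ nbhd_sub]) (use assms finite_bdry finite_box3 in blast)
  also have "\<dots> \<le> (\<Sum>q\<in>bdry X. card (box3 q))" by (rule card_UN_le) (rule finite_bdry[OF assms])
  also have "\<dots> \<le> (\<Sum>q\<in>bdry X. 3 ^ CARD('n))" by (rule sum_mono) (rule card_box3)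
  also have "\<dots> = 3 ^ CARD('n) * card (bdry X)" by simp
  also have "\<dots> \<le> 3 ^ CARD('n) * Per X" using card_bdry[OF assms] by simp
  finally show ?thesis .
qed



lemma real_step:
  fixes n s :: "'a \<Rightarrow> real"
  assumes T: "finite T" and m: "m \<ge> 1" and a: "0 \<le> a"
    and h: "\<And>t. t \<in> T \<Longrightarrow> 0 \<le> n t \<and> n t \<le> a \<and> 0 \<le> s t \<and> n t ^ (m - 1) \<le> s t ^ m"
  shows "(\<Sum>t\<in>T. n t) ^ m \<le> (a + (\<Sum>t\<in>T. s t)) ^ Suc m"
proof -
  have m0: "0 < m" using m by simp
  have b: "n t \<le> root m a * s t" if t: "t \<in> T" for t
  proof -
    have ht: "0 \<le> n t" "n t \<le> a" "0 \<le> s t" "n t ^ (m - 1) \<le> s t ^ m" using h[OF t] by auto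
    have "n t ^ m = n t * n t ^ (m - 1)" using m by (metis Suc_diff_1 m0 power_Suc)
    also have "\<dots> \<le> a * s t ^ m" using ht by (intro mult_mono) auto
    finally have "n t ^ m \<le> a * s t ^ m" .
    then have "root m (n t ^ m) \<le> root m (a * s t ^ m)" using m0 by (rule real_root_le_mono[rotated])
    then show ?thesis using ht m0 by (simp add: real_root_power_cancel real_root_mult)
  qed
  let ?S = "\<Sum>t\<in>T. s t"
  have S0: "0 \<le> ?S" using h by (simp add: sum_nonneg)
  have n0: "0 \<le> (\<Sum>t\<in>T. n t)" using h by (simp add: sum_nonneg)
  have "(\<Sum>t\<in>T. n t) \<le> (\<Sum>t\<in>T. root m a * s t)" by (rule sum_mono) (rule b)
  also have "\<dots> = root m a * ?S" by (simp add: sum_distrib_left)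
  finally have "(\<Sum>t\<in>T. n t) ^ m \<le> (root m a * ?S) ^ m" using n0 by (intro power_mono) auto
  also have "\<dots> = a * ?S ^ m" using m0 a by (simp add: power_mult_distrib)
  also have "\<dots> \<le> (a + ?S) * (a + ?S) ^ m" using a S0 by (intro mult_mono power_mono) auto
  also have "\<dots> = (a + ?S) ^ Suc m" by simp
  finally show ?thesis .
qed

definition proj :: "'n::finite \<Rightarrow> int^'n \<Rightarrow> int^'n" where
  "proj k v = (\<chi> m. if m = k then 0 else v$m)"

lemma proj_nth: "proj k v $ m = (if m = k then 0 else v$m)"
  by (simp add: proj_def)

lemma proj_comm: "proj j (proj k v) = proj k (proj j v)"
  by (simp add: vec_eq_iff proj_nth)

lemma proj_inj_slice:
  assumes "\<forall>v\<in>S. v$k = t" shows "inj_on (proj k) S"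
  using assms by (auto simp: inj_on_def vec_eq_iff proj_nth) (metis)

definition supp_in :: "'n set \<Rightarrow> (int^'n::finite) set \<Rightarrow> bool" where
  "supp_in I X \<longleftrightarrow> (\<forall>v\<in>X. \<forall>m. m \<notin> I \<longrightarrow> v$m = 0)"

lemma iso_supp:
  fixes I :: "'n::finite set"
  assumes "finite I" "I \<noteq> {}"
  shows "finite X \<Longrightarrow> X \<noteq> {} \<Longrightarrow> supp_in I X \<Longrightarrow>
    real (card X) ^ (card I - 1) \<le> real (\<Sum>j\<in>I. card (proj j ` X)) ^ card I"
  using assms
proof (induction I arbitrary: X rule: finite_ne_induct)
  case (singleton k)
  then have "card (proj k ` X) \<ge> 1" by (simp add: Suc_leI card_gt_0_iff)
  then show ?case by simp
next
  case (insert k F)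
  let ?m = "card F"
  have m: "?m \<ge> 1" using insert.hyps by (simp add: Suc_leI card_gt_0_iff)
  have cI: "card (insert k F) = Suc ?m" using insert.hyps by simp
  define T where "T = (\<lambda>v. v$k) ` X"
  define XS where "XS t = {v\<in>X. v$k = t}" for t
  have fT: "finite T" using insert.prems by (simp add: T_def)
  have fXS: "finite (XS t)" for t using insert.prems by (simp add: XS_def)
  have XU: "X = (\<Union>t\<in>T. XS t)" by (auto simp: T_def XS_def)
  have disj: "\<forall>t\<in>T. \<forall>t'\<in>T. t \<noteq> t' \<longrightarrow> XS t \<inter> XS t' = {}" by (auto simp: XS_def)
  have N: "card X = (\<Sum>t\<in>T. card (XS t))"
    by (subst XU, rule card_UN_disjoint[OF fT]) (use fXS disj in auto)
  define a where "a = card (proj k ` X)"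
  define s where "s t = (\<Sum>j\<in>F. card (proj j ` XS t))" for t
  have proj_sum: "card (proj j ` X) = (\<Sum>t\<in>T. card (proj j ` XS t))" if j: "j \<in> F" for j
  proof -
    have jk: "j \<noteq> k" using j insert.hyps by auto
    have "proj j ` X = (\<Union>t\<in>T. proj j ` XS t)" by (subst XU) blast
    moreover have "\<forall>t\<in>T. \<forall>t'\<in>T. t \<noteq> t' \<longrightarrow> proj j ` XS t \<inter> proj j ` XS t' = {}"
      using jk by (auto simp: XS_def proj_nth vec_eq_iff) (metis)
    ultimately show ?thesis using fT fXS by (simp add: card_UN_disjoint)
  qed
  have slice: "real (card (XS t)) ^ (?m - 1) \<le> real (s t) ^ ?m" if t: "t \<in> T" for t
  proof -
    let ?Y = "proj k ` XS t"
    have inj: "inj_on (proj k) (XS t)" by (rule proj_inj_slice[where t=t]) (simp add: XS_def)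
    have Yne: "?Y \<noteq> {}" using t by (auto simp: T_def XS_def)
    have Ysupp: "supp_in F ?Y" using insert.prems(3) by (auto simp: supp_in_def XS_def proj_nth)
    have IH: "real (card ?Y) ^ (?m - 1) \<le> real (\<Sum>j\<in>F. card (proj j ` ?Y)) ^ ?m"
      using insert.IH[of ?Y] fXS Yne Ysupp by auto
    have "card (proj j ` ?Y) = card (proj j ` XS t)" if j: "j \<in> F" for j
    proof -
      have jk: "j \<noteq> k" using j insert.hyps by auto
      have "proj j ` ?Y = proj k ` (proj j ` XS t)" by (auto simp: image_image proj_comm)
      moreover have "inj_on (proj k) (proj j ` XS t)"
        by (rule proj_inj_slice[where t=t]) (use jk in \<open>auto simp: XS_def proj_nth\<close>)
      ultimately show ?thesis by (simp add: card_image)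
    qed
    then have "(\<Sum>j\<in>F. card (proj j ` ?Y)) = s t" by (simp add: s_def)
    moreover have "card ?Y = card (XS t)" using inj by (simp add: card_image)
    ultimately show ?thesis using IH by simp
  qed
  have nle: "card (XS t) \<le> a" for t
  proof -
    have "card (XS t) = card (proj k ` XS t)"
      using proj_inj_slice[of "XS t" k t] by (simp add: XS_def card_image)
    also have "\<dots> \<le> a" unfolding a_def using insert.prems(1)
      by (intro card_mono) (auto simp: XS_def)
    finally show ?thesis .
  qed
  have sumI: "(\<Sum>j\<in>insert k F. card (proj j ` X)) = a + (\<Sum>t\<in>T. s t)"
  proof -
    have "(\<Sum>j\<in>insert k F. card (proj j ` X)) = a + (\<Sum>j\<in>F. card (proj j ` X))"
      using insert.hyps by (simp add: a_def)
    also have "(\<Sum>j\<in>F. card (proj j ` X)) = (\<Sum>j\<in>F. \<Sum>t\<in>T. card (proj j ` XS t))"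
      by (rule sum.cong) (auto simp: proj_sum)
    also have "\<dots> = (\<Sum>t\<in>T. s t)" unfolding s_def by (rule sum.swap)
    finally show ?thesis .
  qed
  have "(\<Sum>t\<in>T. real (card (XS t))) ^ ?m \<le> (real a + (\<Sum>t\<in>T. real (s t))) ^ Suc ?m"
    by (rule real_step[OF fT m]) (use slice nle in auto)
  then show ?case using N sumI cI by simp
qed

lemma isoperimetric_lines:
  fixes X :: "(int^'n::finite) set"
  assumes "finite X" "X \<noteq> {}"
  shows "real (card X) ^ (CARD('n) - 1) \<le> real (\<Sum>j\<in>UNIV. card (proj j ` X)) ^ CARD('n)"
  using iso_supp[of "UNIV :: 'n set" X] assms by (simp add: supp_in_def)



lemma lines_le_Per:
  fixes X :: "(int^'n::finite) set"
  assumes X: "finite X"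
  shows "(\<Sum>k\<in>UNIV. card (proj k ` X)) \<le> Per X"
proof -
  define top where "top k L = (SOME p. p \<in> X \<and> proj k p = L \<and> (\<forall>v\<in>X. proj k v = L \<longrightarrow> v$k \<le> p$k))" for k L
  have top: "top k L \<in> X \<and> proj k (top k L) = L \<and> (\<forall>v\<in>X. proj k v = L \<longrightarrow> v$k \<le> top k L $ k)"
    if L: "L \<in> proj k ` X" for k L
  proof -
    let ?S = "{v\<in>X. proj k v = L}"
    have fS: "finite ((\<lambda>v. v$k) ` ?S)" using X by simp
    have neS: "(\<lambda>v. v$k) ` ?S \<noteq> {}" using L by auto
    obtain p where p: "p \<in> ?S" "p$k = Max ((\<lambda>v. v$k) ` ?S)" using Max_in[OF fS neS] by auto
    have "\<forall>v\<in>X. proj k v = L \<longrightarrow> v$k \<le> p$k" using p(2) fS by auto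
    then have "\<exists>p. p \<in> X \<and> proj k p = L \<and> (\<forall>v\<in>X. proj k v = L \<longrightarrow> v$k \<le> p$k)" using p(1) by blast
    then show ?thesis unfolding top_def by (rule someI_ex)
  qed
  define f where "f = (\<lambda>(k,L). (top k L, stepv (top k L) k 1))"
  let ?A = "Sigma UNIV (\<lambda>k. proj k ` X)"
  have inj: "inj_on f ?A"
  proof (rule inj_onI)
    fix x y assume x: "x \<in> ?A" and y: "y \<in> ?A" and e: "f x = f y"
    obtain k L where xk: "x = (k, L)" by (cases x)
    obtain k' L' where yk: "y = (k', L')" by (cases y)
    have t: "top k L = top k' L'" and s: "stepv (top k L) k 1 = stepv (top k' L') k' 1"
      using e by (auto simp: f_def xk yk)
    have "k = k'"
    proof (rule ccontr)
      assume "k \<noteq> k'"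
      then have "stepv (top k L) k 1 $ k \<noteq> stepv (top k' L') k' 1 $ k" using t by (simp add: stepv_def)
      then show False using s by simp
    qed
    moreover have "L = L'"
    proof -
      have Lx: "L \<in> proj k ` X" using x xk by simp
      have Ly: "L' \<in> proj k' ` X" using y yk by simp
      have "L = proj k (top k L)" using top[OF Lx] by simp
      also have "\<dots> = proj k' (top k' L')" using t \<open>k = k'\<close> by simp
      also have "\<dots> = L'" using top[OF Ly] by simp
      finally show ?thesis .
    qed
    ultimately show "x = y" by (simp add: xk yk)
  qed
  have img: "f ` ?A \<subseteq> bpairs X"
  proof
    fix y assume "y \<in> f ` ?A"
    then obtain k L where L: "L \<in> proj k ` X" and y: "y = f (k, L)" by auto
    let ?p = "top k L"
    have tp: "?p \<in> X" "proj k ?p = L" "\<forall>v\<in>X. proj k v = L \<longrightarrow> v$k \<le> ?p$k" using top[OF L] by auto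
    have "stepv ?p k 1 \<notin> X"
    proof
      assume "stepv ?p k 1 \<in> X"
      moreover have "proj k (stepv ?p k 1) = proj k ?p" by (simp add: vec_eq_iff proj_nth stepv_def)
      then have "proj k (stepv ?p k 1) = L" using tp(2) by simp
      ultimately have "stepv ?p k 1 $ k \<le> ?p $ k" using tp(3) by blast
      then show False by (simp add: stepv_def)
    qed
    moreover have "norm (rvec ?p - rvec (stepv ?p k 1)) = 1" by (rule norm_stepv) simp
    ultimately show "y \<in> bpairs X" using tp(1) by (simp add: y f_def bpairs_def)
  qed
  have "card ?A \<le> card (bpairs X)" by (rule card_inj_on_le[OF inj img finite_bpairs[OF X]])
  moreover have "card ?A = (\<Sum>k\<in>UNIV. card (proj k ` X))" using X by (simp add: card_SigmaI)
  ultimately show ?thesis using Per_bpairs[OF X] by simp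
qed

lemma isoperimetric:
  fixes X :: "(int^'n::finite) set"
  assumes "finite X" "X \<noteq> {}"
  shows "real (card X) ^ (CARD('n) - 1) \<le> real (Per X) ^ CARD('n)"
proof -
  have "real (card X) ^ (CARD('n) - 1) \<le> real (\<Sum>j\<in>UNIV. card (proj j ` X)) ^ CARD('n)"
    by (rule isoperimetric_lines[OF assms])
  also have "\<dots> \<le> real (Per X) ^ CARD('n)"
  proof (rule power_mono)
    show "real (\<Sum>j\<in>UNIV. card (proj j ` X)) \<le> real (Per X)"
      using lines_le_Per[OF assms(1)] by (simp only: of_nat_le_iff)
  qed (rule of_nat_0_le_iff)
  finally show ?thesis .
qed



lemma measure_cball_cart:
  assumes "0 \<le> r"
  shows "measure lebesgue (cball (c::real^'n::finite) r) = unit_ball_vol (real CARD('n)) * r ^ CARD('n)"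
  using content_cball[OF assms, of c] by simp

lemma measure_ball_cart:
  assumes "0 \<le> r"
  shows "measure lebesgue (ball (c::real^'n::finite) r) = unit_ball_vol (real CARD('n)) * r ^ CARD('n)"
  using content_ball[OF assms, of c] by simp

lemma rN_spec:
  shows "0 \<le> rN TYPE('n::finite) N \<and>
    unit_ball_vol (real CARD('n)) * rN TYPE('n) N ^ CARD('n) = real N"
proof -
  let ?w = "unit_ball_vol (real CARD('n))"
  let ?d = "CARD('n)"
  have w: "0 < ?w" by simp
  let ?P = "\<lambda>r. r \<ge> 0 \<and> measure lebesgue (cball (0 :: real ^ 'n) r) = real N"
  define r0 where "r0 = root ?d (real N / ?w)"
  have r0: "0 \<le> r0" "r0 ^ ?d = real N / ?w" using w by (auto simp: r0_def real_root_ge_zero)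
  have P_iff: "?P r \<longleftrightarrow> r \<ge> 0 \<and> ?w * r ^ ?d = real N" for r
    using measure_cball_cart[of r "0::real^'n"] by auto
  have wne: "?w \<noteq> 0" by (metis w order_less_irrefl)
  have "?w * r0 ^ ?d = real N" using r0 wne by simp
  then have "?P r0" using P_iff r0 by blast
  moreover have "r = r0" if "?P r" for r
  proof -
    have r0': "?w * r0 ^ ?d = real N" using r0 wne by simp
    have "r \<ge> 0" "?w * r ^ ?d = ?w * r0 ^ ?d" using that P_iff[of r] r0' by auto
    then have "r \<ge> 0" "r ^ ?d = r0 ^ ?d" using wne by auto
    then show ?thesis using r0(1) by (simp add: power_eq_iff_eq_base)
  qed
  ultimately have "?P (THE r. ?P r)" by (rule theI)
  then show ?thesis unfolding rN_def using P_iff by blast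
qed

lemma power_diff_bound:
  fixes a b :: real
  assumes "0 \<le> a" "a \<le> b"
  shows "b ^ n - a ^ n \<le> real n * b ^ (n - 1) * (b - a)"
proof (induction n)
  case 0 then show ?case by simp
next
  case (Suc n)
  have b0: "0 \<le> b" using assms by simp
  have "b ^ Suc n - a ^ Suc n = b * (b ^ n - a ^ n) + a ^ n * (b - a)" by (simp add: algebra_simps)
  also have "\<dots> \<le> b * (real n * b ^ (n - 1) * (b - a)) + b ^ n * (b - a)"
    using Suc b0 assms by (intro add_mono mult_left_mono mult_right_mono power_mono) auto
  also have "b * (real n * b ^ (n - 1) * (b - a)) = real n * (b * b ^ (n - 1)) * (b - a)" by simp
  also have "real n * (b * b ^ (n - 1)) = real n * b ^ n"
    by (cases n) auto
  finally have "b ^ Suc n - a ^ Suc n \<le> real n * b ^ n * (b - a) + b ^ n * (b - a)" by simp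
  then show ?case by (simp add: algebra_simps)
qed

definition Kset :: "real^'n::finite \<Rightarrow> real \<Rightarrow> (int^'n) set" where
  "Kset c r = {i. cube i \<inter> cball c r \<noteq> {} \<and> \<not> cube i \<subseteq> cball c r}"

lemma cube_diam:
  fixes x y :: "real^'n::finite"
  assumes "x \<in> cube i" "y \<in> cube i"
  shows "dist x y \<le> real CARD('n::finite)"
proof -
  have "dist x y = norm (x - y)" by (simp add: dist_norm)
  also have "\<dots> \<le> (\<Sum>k\<in>UNIV. \<bar>(x - y)$k\<bar>)" by (rule norm_le_l1_cart)
  also have "\<dots> \<le> (\<Sum>k\<in>(UNIV::'n set). 1)"
  proof (rule sum_mono)
    fix k
    have h: "\<bar>x$k - real_of_int (i$k)\<bar> \<le> 1/2" "\<bar>y$k - real_of_int (i$k)\<bar> \<le> 1/2"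
      using assms by (auto simp: mem_cube)
    have "x$k - y$k \<le> 1" "y$k - x$k \<le> 1" using h unfolding abs_le_iff by linarith+
    then show "\<bar>(x - y)$k\<bar> \<le> 1" by (simp add: abs_le_iff)
  qed
  finally show ?thesis by simp
qed

lemma Kset_sub:
  fixes c :: "real^'n::finite"
  assumes "i \<in> Kset c r"
  shows "cube i \<subseteq> cball c (r + real CARD('n)) - ball c (r - real CARD('n::finite))"
proof
  fix w assume w: "w \<in> cube i"
  obtain x where x: "x \<in> cube i" "dist c x \<le> r" using assms by (auto simp: Kset_def)
  obtain y where y: "y \<in> cube i" "dist c y > r" using assms by (auto simp: Kset_def subset_iff not_le)
  have "dist c w \<le> dist c x + dist x w" by (rule dist_triangle)
  moreover have "dist x w \<le> real CARD('n)" by (rule cube_diam[OF x(1) w])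
  moreover have "dist c y \<le> dist c w + dist w y" by (rule dist_triangle)
  moreover have "dist w y \<le> real CARD('n)" by (rule cube_diam[OF w y(1)])
  ultimately show "w \<in> cball c (r + real CARD('n)) - ball c (r - real CARD('n))"
    using x y by auto
qed

lemma finite_Kset: "finite (Kset (c::real^'n::finite) r)"
proof -
  have "Kset c r \<subseteq> {i. rvec i \<in> cball c (r + real CARD('n))}"
  proof
    fix i assume "i \<in> Kset c r"
    then have "rvec i \<in> cball c (r + real CARD('n)) - ball c (r - real CARD('n))"
      using Kset_sub[of i c r] by (auto simp: mem_cube subset_iff)
    then show "i \<in> {i. rvec i \<in> cball c (r + real CARD('n))}" by simp
  qed
  then show ?thesis using finite_lattice_cball finite_subset by blast
qed

lemma card_Kset:
  assumes r: "0 \<le> r"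
  shows "real (card (Kset (c::real^'n::finite) r)) \<le>
    unit_ball_vol (real CARD('n)) * real CARD('n) * (r + real CARD('n)) ^ (CARD('n) - 1) * (2 * real CARD('n))"
proof -
  let ?q = "real CARD('n)" and ?d = "CARD('n)" and ?w = "unit_ball_vol (real CARD('n))"
  let ?b = "r + ?q" and ?a = "max (r - ?q) 0"
  let ?A = "cball c ?b - ball c (r - ?q)"
  have q: "0 < ?q" by simp
  have A: "?A \<in> lmeasurable" by (intro fmeasurable.Diff) auto
  have "real (card (Kset c r)) = measure lebesgue (\<Union>(cube ` Kset c r))"
    by (simp add: measure_cubes finite_Kset)
  also have "\<dots> \<le> measure lebesgue ?A"
    by (rule measure_mono_fmeasurable[OF _ _ A]) (use Kset_sub finite_Kset in \<open>auto intro!: fmeasurableD cubes_lmeasurable\<close>)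
  also have "\<dots> = measure lebesgue (cball c ?b) - measure lebesgue (ball c (r - ?q))"
    by (rule measurable_measure_Diff) auto
  also have "measure lebesgue (ball c (r - ?q)) = ?w * ?a ^ ?d"
  proof (cases "r - ?q \<ge> 0")
    case True then show ?thesis using measure_ball_cart[OF True, of c] by simp
  next
    case False
    then have e: "ball c (r - ?q) = {}" by simp
    show ?thesis using False by (simp only: e) simp
  qed
  also have "measure lebesgue (cball c ?b) = ?w * ?b ^ ?d" using r q by (intro measure_cball_cart) simp
  also have "?w * ?b ^ ?d - ?w * ?a ^ ?d = ?w * (?b ^ ?d - ?a ^ ?d)" by (simp add: algebra_simps)
  also have "\<dots> \<le> ?w * (real ?d * ?b ^ (?d - 1) * (?b - ?a))"
    using r q by (intro mult_left_mono power_diff_bound) auto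
  also have "\<dots> \<le> ?w * (real ?d * ?b ^ (?d - 1) * (2 * ?q))"
    using r q by (intro mult_left_mono mult_right_mono) auto
  finally show ?thesis by (simp add: algebra_simps)
qed



lemma card_split: "finite A \<Longrightarrow> card A = card (A - B) + card (A \<inter> B)"
proof -
  assume A: "finite A"
  have "A = (A - B) \<union> (A \<inter> B)" by blast
  then have "card A = card ((A - B) \<union> (A \<inter> B))" by simp
  also have "\<dots> = card (A - B) + card (A \<inter> B)" using A by (intro card_Un_disjoint) auto
  finally show ?thesis .
qed

lemma X_sub_nbhd: "X \<subseteq> nbhd X"
  unfolding nbhd_def by force

lemma main_ineq:
  fixes X :: "(int^'n::finite) set" and c :: "real^'n"
  assumes X: "finite X" and r: "0 \<le> r"
    and vol: "unit_ball_vol (real CARD('n)) * r ^ CARD('n) = real (card X)"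
  shows "real (card (symdiff X {i. rvec i \<in> cball c r}))
    \<le> measure lebesgue (symdiff (zeta X) (cball c r)) + 3 * real (card (Kset c r)) + 3 ^ CARD('n) * real (Per X)"
proof -
  let ?B = "cball c r" and ?Z = "zeta X" and ?U = "\<Union>(cube ` X)"
  define Y where "Y = {i. rvec i \<in> cball c r}"
  define E where "E = nbhd X - X"
  define K where "K = Kset c r"
  let ?UE = "\<Union>(cube ` E)"
  define N where "N = real (card X)"
  define a where "a = real (card (X \<inter> Y))"
  have fY: "finite Y" unfolding Y_def by (rule finite_lattice_cball)
  have fE: "finite E" unfolding E_def using finite_nbhd[OF X] by simp
  have fK: "finite K" unfolding K_def by (rule finite_Kset)
  have Bm: "?B \<in> lmeasurable" by simp
  have Zm: "?Z \<in> lmeasurable" by (rule zeta_lmeasurable[OF X])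
  have Um: "?U \<in> lmeasurable" by (rule cubes_lmeasurable[OF X])
  have UEm: "?UE \<in> lmeasurable" by (rule cubes_lmeasurable[OF fE])
  have muB: "measure lebesgue ?B = N" using measure_cball_cart[OF r, of c] vol by (simp add: N_def)
  have muU: "measure lebesgue ?U = N" using measure_cubes[OF X] by (simp add: N_def)
  have muUE: "measure lebesgue ?UE = real (card E)" using measure_cubes[OF fE] .
  have c1: "real (card (symdiff X Y)) = (N - a) + (real (card Y) - a)"
  proof -
    have "card (symdiff X Y) = card (X - Y) + card (Y - X)"
      unfolding symdiff_def using X fY by (intro card_Un_disjoint) auto
    moreover have "card X = card (X - Y) + card (X \<inter> Y)" using card_split[OF X] .
    moreover have "card Y = card (Y - X) + card (X \<inter> Y)" using card_split[OF fY, of X] by (simp add: Int_commute)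
    ultimately show ?thesis by (simp add: N_def a_def)
  qed
  have m1: "measure lebesgue (symdiff ?Z ?B) = measure lebesgue (?Z - ?B) + measure lebesgue (?B - ?Z)"
  proof -
    have "measure lebesgue ((?Z - ?B) \<union> (?B - ?Z)) = measure lebesgue (?Z - ?B) + measure lebesgue (?B - ?Z) - measure lebesgue ((?Z - ?B) \<inter> (?B - ?Z))"
      using Zm Bm by (intro measure_Un3) auto
    moreover have "(?Z - ?B) \<inter> (?B - ?Z) = {}" by blast
    ultimately show ?thesis unfolding symdiff_def by simp
  qed
  have UB: "measure lebesgue (?U - ?B) = N - measure lebesgue (?U \<inter> ?B)"
  proof -
    have "?U - ?B = ?U - (?U \<inter> ?B)" by blast
    then have "measure lebesgue (?U - ?B) = measure lebesgue ?U - measure lebesgue (?U \<inter> ?B)"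
      using Um Bm by (simp add: measurable_measure_Diff fmeasurable.Int fmeasurableD)
    then show ?thesis using muU by simp
  qed
  have BU: "measure lebesgue (?B - ?U) = N - measure lebesgue (?U \<inter> ?B)"
  proof -
    have "?B - ?U = ?B - (?U \<inter> ?B)" by blast
    then have "measure lebesgue (?B - ?U) = measure lebesgue ?B - measure lebesgue (?U \<inter> ?B)"
      using Um Bm by (simp add: measurable_measure_Diff fmeasurable.Int fmeasurableD)
    then show ?thesis using muB by simp
  qed
  have m2: "measure lebesgue (?U - ?B) \<le> measure lebesgue (?Z - ?B)"
    using cubes_sub_zeta[of X] Um Zm Bm
    by (intro measure_mono_fmeasurable) (auto intro: fmeasurable.Diff fmeasurableD)
  have ZW: "?Z \<subseteq> ?U \<union> ?UE"
  proof -
    have "nbhd X = X \<union> E" using X_sub_nbhd[of X] by (auto simp: E_def)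
    then show ?thesis using zeta_sub_cubes[of X] by auto
  qed
  have m3: "measure lebesgue (?B - ?U) \<le> measure lebesgue (?B - ?Z) + real (card E)"
  proof -
    have UUE: "?U \<union> ?UE \<in> sets lebesgue" using Um UEm by (intro fmeasurableD fmeasurable.Un)
    have D1: "?B - (?U \<union> ?UE) \<in> lmeasurable" using Bm UUE by (rule fmeasurable_Diff)
    have D2: "(?B - (?U \<union> ?UE)) \<union> ?UE \<in> lmeasurable" using D1 UEm by (rule fmeasurable.Un)
    have D3: "?B - ?U \<in> sets lebesgue" using Bm Um by (intro fmeasurableD fmeasurable_Diff) (auto intro: fmeasurableD)
    have "measure lebesgue (?B - ?U) \<le> measure lebesgue ((?B - (?U \<union> ?UE)) \<union> ?UE)"
      using D2 D3 by (intro measure_mono_fmeasurable) auto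
    also have "\<dots> \<le> measure lebesgue (?B - (?U \<union> ?UE)) + measure lebesgue ?UE"
      using Um Bm UEm by (intro measure_Un_le) (auto intro: fmeasurable.Diff fmeasurable.Un fmeasurableD)
    also have "measure lebesgue (?B - (?U \<union> ?UE)) \<le> measure lebesgue (?B - ?Z)"
      using ZW Um Bm UEm Zm by (intro measure_mono_fmeasurable) (auto intro: fmeasurable.Diff fmeasurable.Un fmeasurableD)
    finally show ?thesis using muUE by simp
  qed
  have m4: "measure lebesgue (?U \<inter> ?B) \<le> a + real (card K)"
  proof -
    have sub: "?U \<inter> ?B \<subseteq> \<Union>(cube ` (X \<inter> Y)) \<union> \<Union>(cube ` K)"
    proof
      fix x assume "x \<in> ?U \<inter> ?B"
      then obtain i where i: "i \<in> X" "x \<in> cube i" "x \<in> ?B" by blast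
      show "x \<in> \<Union>(cube ` (X \<inter> Y)) \<union> \<Union>(cube ` K)"
      proof (cases "i \<in> Y")
        case True then show ?thesis using i by blast
      next
        case False
        then have "rvec i \<notin> ?B" by (simp add: Y_def)
        moreover have "rvec i \<in> cube i" by (simp add: mem_cube)
        ultimately have "i \<in> K" using i by (auto simp: K_def Kset_def)
        then show ?thesis using i by blast
      qed
    qed
    have fXY: "finite (X \<inter> Y)" using X by simp
    have "measure lebesgue (?U \<inter> ?B) \<le> measure lebesgue (\<Union>(cube ` (X \<inter> Y)) \<union> \<Union>(cube ` K))"
      using sub Um Bm cubes_lmeasurable[OF fXY] cubes_lmeasurable[OF fK]
      by (intro measure_mono_fmeasurable) (auto intro: fmeasurable.Int fmeasurable.Un fmeasurableD)
    also have "\<dots> \<le> measure lebesgue (\<Union>(cube ` (X \<inter> Y))) + measure lebesgue (\<Union>(cube ` K))"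
      using cubes_lmeasurable[OF fXY] cubes_lmeasurable[OF fK]
      by (intro measure_Un_le) (auto intro: fmeasurableD)
    also have "\<dots> = a + real (card K)" using measure_cubes[OF fXY] measure_cubes[OF fK] by (simp add: a_def)
    finally show ?thesis .
  qed
  have m5: "real (card Y) \<le> N + real (card K)"
  proof -
    define Yin where "Yin = {i\<in>Y. cube i \<subseteq> ?B}"
    have fYin: "finite Yin" using fY by (simp add: Yin_def)
    have "Y \<subseteq> Yin \<union> K"
    proof
      fix i assume iY: "i \<in> Y"
      show "i \<in> Yin \<union> K"
      proof (cases "cube i \<subseteq> ?B")
        case True then show ?thesis using iY by (simp add: Yin_def)
      next
        case False
        have "rvec i \<in> cube i \<inter> ?B" using iY by (simp add: mem_cube Y_def)
        then show ?thesis using False by (auto simp: K_def Kset_def)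
      qed
    qed
    then have "card Y \<le> card (Yin \<union> K)" using fYin fK by (intro card_mono) auto
    also have "\<dots> \<le> card Yin + card K" by (rule card_Un_le)
    finally have cY: "real (card Y) \<le> real (card Yin) + real (card K)" by linarith
    have "real (card Yin) = measure lebesgue (\<Union>(cube ` Yin))" using measure_cubes[OF fYin] by simp
    also have "\<dots> \<le> measure lebesgue ?B"
      using cubes_lmeasurable[OF fYin] Bm
      by (intro measure_mono_fmeasurable) (auto simp: Yin_def intro: fmeasurableD)
    finally show ?thesis using cY muB by simp
  qed
  have cE: "real (card E) \<le> 3 ^ CARD('n) * real (Per X)"
  proof -
    have "card E \<le> 3 ^ CARD('n) * Per X" unfolding E_def by (rule card_nbhd_diff[OF X])
    then have "real (card E) \<le> real (3 ^ CARD('n) * Per X)" by (simp only: of_nat_le_iff)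
    then show ?thesis by simp
  qed
  show ?thesis
    using c1 m1 UB BU m2 m3 m4 m5 cE unfolding Y_def[symmetric] K_def[symmetric] by linarith
qed



definition kconst :: "'n::finite itself \<Rightarrow> real" where
  "kconst _ = unit_ball_vol (real CARD('n)) * real CARD('n)
     * (1 + real CARD('n) / root CARD('n) (1 / unit_ball_vol (real CARD('n)))) ^ (CARD('n) - 1)
     * (2 * real CARD('n)) * root CARD('n) (1 / unit_ball_vol (real CARD('n)) ^ (CARD('n) - 1))"

lemma kconst_nonneg: "0 \<le> kconst TYPE('n::finite)"
  unfolding kconst_def
  by (intro mult_nonneg_nonneg zero_le_power add_nonneg_nonneg divide_nonneg_nonneg real_root_ge_zero) auto

lemma Kset_Per:
  fixes c :: "real^'n::finite"
  assumes r: "0 \<le> r" and vol: "unit_ball_vol (real CARD('n)) * r ^ CARD('n) = real N"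
    and N: "1 \<le> N" and P: "0 \<le> P" and iso: "real N ^ (CARD('n) - 1) \<le> P ^ CARD('n)"
  shows "real (card (Kset c r)) \<le> kconst TYPE('n) * P"
proof -
  let ?d = "CARD('n)" and ?q = "real CARD('n)" and ?w = "unit_ball_vol (real CARD('n))"
  define r1 where "r1 = root ?d (1 / ?w)"
  define lam where "lam = 1 + ?q / r1"
  define kap where "kap = root ?d (1 / ?w ^ (?d - 1))"
  have w: "0 < ?w" by simp
  have d0: "0 < ?d" by simp
  obtain m where m: "?d = Suc m" using d0 gr0_implies_Suc by blast
  have r1pos: "0 < r1" unfolding r1_def using w d0 by simp
  have r1d: "r1 ^ ?d = 1 / ?w" unfolding r1_def using w d0 by simp
  have kapd: "kap ^ ?d = 1 / ?w ^ (?d - 1)" unfolding kap_def using w d0 by simp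
  have kap0: "0 \<le> kap" unfolding kap_def using w by (simp add: real_root_ge_zero)
  have wne: "?w \<noteq> 0" by (metis w order_less_irrefl)
  have rd: "r ^ ?d = real N / ?w" using vol wne by (simp add: eq_divide_eq mult.commute)
  have "r1 ^ ?d \<le> r ^ ?d" using r1d rd N w by (simp add: divide_right_mono)
  then have "r1 ^ Suc m \<le> r ^ Suc m" using m by simp
  then have r1r: "r1 \<le> r" using r by (rule power_le_imp_le_base)
  have b: "r + ?q \<le> lam * r"
  proof -
    have "?q \<le> ?q * (r / r1)" using r1r r1pos by (simp add: le_divide_eq)
    then show ?thesis by (simp add: lam_def algebra_simps)
  qed
  have rpow: "r ^ (?d - 1) \<le> kap * P"
  proof -
    have "(r ^ (?d - 1)) ^ ?d = (r ^ ?d) ^ (?d - 1)" by (simp add: power_mult[symmetric] mult.commute)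
    also have "\<dots> = real N ^ (?d - 1) / ?w ^ (?d - 1)" using rd by (simp add: power_divide)
    also have "\<dots> \<le> P ^ ?d / ?w ^ (?d - 1)" using iso w by (simp add: divide_right_mono)
    also have "\<dots> = (kap * P) ^ ?d" using kapd by (simp add: power_mult_distrib)
    finally have "(r ^ (?d - 1)) ^ Suc m \<le> (kap * P) ^ Suc m" using m by simp
    moreover have "0 \<le> kap * P" using kap0 P by simp
    ultimately show ?thesis by (rule power_le_imp_le_base)
  qed
  have "real (card (Kset c r)) \<le> ?w * ?q * (r + ?q) ^ (?d - 1) * (2 * ?q)"
    by (rule card_Kset[OF r])
  also have "\<dots> \<le> ?w * ?q * (lam * r) ^ (?d - 1) * (2 * ?q)"
    using b r w by (intro mult_right_mono mult_left_mono power_mono) auto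
  also have "\<dots> = ?w * ?q * lam ^ (?d - 1) * (2 * ?q) * r ^ (?d - 1)" by (simp add: power_mult_distrib)
  also have "\<dots> \<le> ?w * ?q * lam ^ (?d - 1) * (2 * ?q) * (kap * P)"
    using rpow w r1pos by (intro mult_left_mono) (auto simp: lam_def)
  also have "\<dots> = kconst TYPE('n) * P" unfolding kconst_def lam_def kap_def r1_def by simp
  finally show ?thesis .
qed



lemma ball_img: "(\<lambda>x. x + c) ` cball (0 :: real^'n::finite) r = cball c r"
proof (rule set_eqI)
  fix x :: "real^'n"
  have "x \<in> (\<lambda>x. x + c) ` cball 0 r \<longleftrightarrow> x - c \<in> cball 0 r"
    by (auto simp: image_iff intro: bexI[of _ "x - c"])
  also have "\<dots> \<longleftrightarrow> x \<in> cball c r" by (simp add: dist_norm norm_minus_commute)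
  finally show "x \<in> (\<lambda>x. x + c) ` cball 0 r \<longleftrightarrow> x \<in> cball c r" .
qed

lemma lattice_img: "(\<lambda>b. z + b) ` {b. rvec b \<in> cball (0 :: real^'n::finite) r} = {i. rvec i \<in> cball (rvec z) r}"
proof (rule set_eqI)
  fix i :: "int^'n"
  have "i \<in> (\<lambda>b. z + b) ` {b. rvec b \<in> cball 0 r} \<longleftrightarrow> rvec (i - z) \<in> cball 0 r"
    by (auto simp: image_iff intro: exI[of _ "i - z"])
  also have "\<dots> \<longleftrightarrow> rvec i \<in> cball (rvec z) r" by (simp add: rvec_diff dist_norm norm_minus_commute)
  finally show "i \<in> (\<lambda>b. z + b) ` {b. rvec b \<in> cball 0 r} \<longleftrightarrow> i \<in> {i. rvec i \<in> cball (rvec z) r}" by simp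
qed

theorem lemma4p8:
  assumes "CARD('n::finite) \<ge> 2"
  shows "\<exists>C>0. \<forall>N::nat. N \<ge> 1 \<longrightarrow> (\<forall>X \<in> (XN N :: (int ^ 'n) set set). \<forall>z :: int ^ 'n.
     real (card (symdiff X ((\<lambda>b. z + b) ` {b. rvec b \<in> cball (0 :: real ^ 'n) (rN TYPE('n) N)})))
       \<le> measure lebesgue (symdiff (zeta X) ((\<lambda>x. x + rvec z) ` cball (0 :: real ^ 'n) (rN TYPE('n) N)))
         + C * real N powr ((real CARD('n) - 1) / real CARD('n)) * PerN N X)"
proof -
  define C where "C = 3 * kconst TYPE('n) + 3 ^ CARD('n) + 1"
  have k0: "0 \<le> kconst TYPE('n)" by (rule kconst_nonneg)
  have p0: "(0::real) < 3 ^ CARD('n)" by simp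
  have C0: "C > 0" unfolding C_def using k0 p0 by linarith
  have main: "real (card (symdiff X ((\<lambda>b. z + b) ` {b. rvec b \<in> cball (0 :: real ^ 'n) (rN TYPE('n) N)})))
       \<le> measure lebesgue (symdiff (zeta X) ((\<lambda>x. x + rvec z) ` cball (0 :: real ^ 'n) (rN TYPE('n) N)))
         + C * real N powr ((real CARD('n) - 1) / real CARD('n)) * PerN N X"
    if N: "N \<ge> 1" and XN: "X \<in> (XN N :: (int ^ 'n) set set)" for N X and z :: "int^'n"
  proof -
    let ?r = "rN TYPE('n) N" and ?c = "rvec z"
    have X: "finite X" "card X = N" using XN by (auto simp: XN_def)
    have Xne: "X \<noteq> {}" using X N by auto
    have rs: "0 \<le> ?r" "unit_ball_vol (real CARD('n)) * ?r ^ CARD('n) = real N" using rN_spec[where 'n='n and N=N] by auto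
    have MI: "real (card (symdiff X {i. rvec i \<in> cball ?c ?r}))
      \<le> measure lebesgue (symdiff (zeta X) (cball ?c ?r)) + 3 * real (card (Kset ?c ?r)) + 3 ^ CARD('n) * real (Per X)"
      by (rule main_ineq[OF X(1) rs(1)]) (use rs X in simp)
    have iso: "real N ^ (CARD('n) - 1) \<le> real (Per X) ^ CARD('n)"
      using isoperimetric[OF X(1) Xne] X by simp
    have KP: "real (card (Kset ?c ?r)) \<le> kconst TYPE('n) * real (Per X)"
      by (rule Kset_Per[OF rs(1) rs(2) N _ iso]) simp
    have pw: "C * real N powr ((real CARD('n) - 1) / real CARD('n)) * PerN N X = C * real (Per X)"
    proof -
      have Npos: "0 < real N" using N by simp
      have "real N powr ((real CARD('n) - 1) / real CARD('n)) * real N powr (- (real CARD('n) - 1) / real CARD('n))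
          = real N powr ((real CARD('n) - 1) / real CARD('n) + (- (real CARD('n) - 1) / real CARD('n)))"
        by (rule powr_add[symmetric])
      also have "(real CARD('n) - 1) / real CARD('n) + (- (real CARD('n) - 1) / real CARD('n)) = 0"
        by (simp only: minus_divide_left)
      finally have "real N powr ((real CARD('n) - 1) / real CARD('n)) * real N powr (- (real CARD('n) - 1) / real CARD('n)) = 1"
        using Npos by simp
      then show ?thesis unfolding PerN_def by (metis mult.assoc mult.left_neutral)
    qed
    have "real (card (Kset ?c ?r)) * 3 + 3 ^ CARD('n) * real (Per X) \<le> C * real (Per X)"
      using KP unfolding C_def by (simp add: algebra_simps)
    then show ?thesis
      unfolding ball_img lattice_img pw using MI by linarith
  qed
  show ?thesis using C0 main by blast
qed

end
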